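(* Let $G$ and $H$ be finite simple graphs and $k$ an integer. Then $$\gamma^d_k(G\,\square\, H)\leq \min\{\gamma^d_k(G)\,n(H),\ \gamma^d_k(H)\,n(G)\}.$$
   Context: All graphs are finite and simple; $n(G)=|V_G|$. For $S\subseteq V_G$ and $v\in V_G$, $N_S(v)=\{u\in S: uv\in E_G\}$ and $\bar S=V_G\setminus S$. For an integer $k$, a nonempty $S\subseteq V_G$ is a global defensive $k$-alliance in $G$ if every vertex outside $S$ has a neighbor in $S$ and $|N_S(v)|\ge |N_{\bar S}(v)|+k$ for every $v\in S$; $\gamma^d_k(G)$ is the minimum size of such a set ($\infty$ if none exists, with $\infty\cdot n=\infty$). The Cartesian product $G\,\square\,H$ has vertex set $V_G\times V_H$, with $(g,h)\sim(g',h')$ iff either $g=g'$ and $hh'\in E_H$, or $gg'\in E_G$ and $h=h'$. *)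

theory Defs
  imports Main "HOL-Library.Extended_Nat"
begin

definition simple_graph :: "'a set \<Rightarrow> ('a \<Rightarrow> 'a \<Rightarrow> bool) \<Rightarrow> bool" where
  "simple_graph V E \<longleftrightarrow> finite V \<and> (\<forall>u v. E u v \<longrightarrow> u \<in> V \<and> v \<in> V)
     \<and> (\<forall>u v. E u v \<longrightarrow> E v u) \<and> (\<forall>v. \<not> E v v)"

definition nbhd :: "('a \<Rightarrow> 'a \<Rightarrow> bool) \<Rightarrow> 'a set \<Rightarrow> 'a \<Rightarrow> 'a set" where
  "nbhd E S v = {u \<in> S. E u v}"

definition global_def_alliance ::
  "'a set \<Rightarrow> ('a \<Rightarrow> 'a \<Rightarrow> bool) \<Rightarrow> int \<Rightarrow> 'a set \<Rightarrow> bool" where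
  "global_def_alliance V E k S \<longleftrightarrow> S \<subseteq> V \<and> S \<noteq> {}
     \<and> (\<forall>v \<in> V - S. \<exists>u \<in> S. E u v)
     \<and> (\<forall>v \<in> S. int (card (nbhd E S v)) \<ge> int (card (nbhd E (V - S) v)) + k)"

text \<open>Global defensive k-alliance number; \<infinity> if no such set exists (Inf {} = \<infinity>).\<close>
definition gda_number :: "'a set \<Rightarrow> ('a \<Rightarrow> 'a \<Rightarrow> bool) \<Rightarrow> int \<Rightarrow> enat" where
  "gda_number V E k = Inf {enat (card S) | S. global_def_alliance V E k S}"

definition cart_edges ::
  "('a \<Rightarrow> 'a \<Rightarrow> bool) \<Rightarrow> ('b \<Rightarrow> 'b \<Rightarrow> bool) \<Rightarrow> ('a \<times> 'b) \<Rightarrow> ('a \<times> 'b) \<Rightarrow> bool" where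
  "cart_edges EG EH x y \<longleftrightarrow>
     (fst x = fst y \<and> EH (snd x) (snd y)) \<or> (EG (fst x) (fst y) \<and> snd x = snd y)"

end

theory Submission
  imports Defs
begin

lemma alliance_left:
  assumes G: "simple_graph VG EG" and H: "simple_graph VH EH" and ne: "VH \<noteq> {}"
    and A: "global_def_alliance VG EG k S"
  shows "global_def_alliance (VG \<times> VH) (cart_edges EG EH) k (S \<times> VH)"
proof -
  have SV: "S \<subseteq> VG" "S \<noteq> {}" and dom: "\<forall>v \<in> VG - S. \<exists>u \<in> S. EG u v"
    and def: "\<forall>v \<in> S. int (card (nbhd EG S v)) \<ge> int (card (nbhd EG (VG - S) v)) + k"
    using A unfolding global_def_alliance_def by auto
  have fin: "finite (VG \<times> VH)" using G H unfolding simple_graph_def by auto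
  have "\<forall>v \<in> VG \<times> VH - S \<times> VH. \<exists>u \<in> S \<times> VH. cart_edges EG EH u v"
  proof
    fix v assume v: "v \<in> VG \<times> VH - S \<times> VH"
    then obtain g h where gh: "v = (g,h)" "g \<in> VG - S" "h \<in> VH" by auto
    then obtain u where "u \<in> S" "EG u g" using dom by auto
    thus "\<exists>u \<in> S \<times> VH. cart_edges EG EH u v" using gh
      by (intro bexI[of _ "(u,h)"]) (auto simp: cart_edges_def)
  qed
  moreover have "\<forall>v \<in> S \<times> VH. int (card (nbhd (cart_edges EG EH) (S \<times> VH) v))
      \<ge> int (card (nbhd (cart_edges EG EH) (VG \<times> VH - S \<times> VH) v)) + k"
  proof
    fix v assume v: "v \<in> S \<times> VH"
    then obtain g h where gh: "v = (g,h)" "g \<in> S" "h \<in> VH" by auto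
    have inj: "inj (\<lambda>u. (u,h))" by (auto simp: inj_def)
    have e1: "nbhd (cart_edges EG EH) (VG \<times> VH - S \<times> VH) v = (\<lambda>u. (u,h)) ` nbhd EG (VG - S) g"
      using gh G unfolding nbhd_def cart_edges_def simple_graph_def by auto
    have s2: "(\<lambda>u. (u,h)) ` nbhd EG S g \<subseteq> nbhd (cart_edges EG EH) (S \<times> VH) v"
      using gh unfolding nbhd_def cart_edges_def by auto
    have f2: "finite (nbhd (cart_edges EG EH) (S \<times> VH) v)"
      using SV fin unfolding nbhd_def by (rule_tac finite_subset[OF _ fin]) auto
    have "card (nbhd EG S g) \<le> card (nbhd (cart_edges EG EH) (S \<times> VH) v)"
      proof -
      have "card ((\<lambda>u. (u,h)) ` nbhd EG S g) = card (nbhd EG S g)"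
        by (rule card_image) (auto simp: inj_on_def)
      thus ?thesis using card_mono[OF f2 s2] by simp
    qed
    moreover have "card (nbhd (cart_edges EG EH) (VG \<times> VH - S \<times> VH) v) = card (nbhd EG (VG - S) g)"
      using e1 card_image[OF inj_on_subset[OF inj]] by simp
    ultimately show "int (card (nbhd (cart_edges EG EH) (S \<times> VH) v))
      \<ge> int (card (nbhd (cart_edges EG EH) (VG \<times> VH - S \<times> VH) v)) + k"
      using def gh by force
  qed
  ultimately show ?thesis using SV ne unfolding global_def_alliance_def by auto
qed

lemma alliance_right:
  assumes G: "simple_graph VG EG" and H: "simple_graph VH EH" and ne: "VG \<noteq> {}"
    and A: "global_def_alliance VH EH k S"
  shows "global_def_alliance (VG \<times> VH) (cart_edges EG EH) k (VG \<times> S)"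
proof -
  have SV: "S \<subseteq> VH" "S \<noteq> {}" and dom: "\<forall>v \<in> VH - S. \<exists>u \<in> S. EH u v"
    and def: "\<forall>v \<in> S. int (card (nbhd EH S v)) \<ge> int (card (nbhd EH (VH - S) v)) + k"
    using A unfolding global_def_alliance_def by auto
  have fin: "finite (VG \<times> VH)" using G H unfolding simple_graph_def by auto
  have "\<forall>v \<in> VG \<times> VH - VG \<times> S. \<exists>u \<in> VG \<times> S. cart_edges EG EH u v"
  proof
    fix v assume v: "v \<in> VG \<times> VH - VG \<times> S"
    then obtain g h where gh: "v = (g,h)" "h \<in> VH - S" "g \<in> VG" by auto
    then obtain u where "u \<in> S" "EH u h" using dom by auto
    thus "\<exists>u \<in> VG \<times> S. cart_edges EG EH u v" using gh
      by (intro bexI[of _ "(g,u)"]) (auto simp: cart_edges_def)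
  qed
  moreover have "\<forall>v \<in> VG \<times> S. int (card (nbhd (cart_edges EG EH) (VG \<times> S) v))
      \<ge> int (card (nbhd (cart_edges EG EH) (VG \<times> VH - VG \<times> S) v)) + k"
  proof
    fix v assume v: "v \<in> VG \<times> S"
    then obtain g h where gh: "v = (g,h)" "h \<in> S" "g \<in> VG" by auto
    have inj: "inj (\<lambda>u. (g,u))" by (auto simp: inj_def)
    have e1: "nbhd (cart_edges EG EH) (VG \<times> VH - VG \<times> S) v = (\<lambda>u. (g,u)) ` nbhd EH (VH - S) h"
      using gh H unfolding nbhd_def cart_edges_def simple_graph_def by auto
    have s2: "(\<lambda>u. (g,u)) ` nbhd EH S h \<subseteq> nbhd (cart_edges EG EH) (VG \<times> S) v"
      using gh unfolding nbhd_def cart_edges_def by auto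
    have f2: "finite (nbhd (cart_edges EG EH) (VG \<times> S) v)"
      using SV fin unfolding nbhd_def by (rule_tac finite_subset[OF _ fin]) auto
    have "card (nbhd EH S h) \<le> card (nbhd (cart_edges EG EH) (VG \<times> S) v)"
      proof -
      have "card ((\<lambda>u. (g,u)) ` nbhd EH S h) = card (nbhd EH S h)"
        by (rule card_image) (auto simp: inj_on_def)
      thus ?thesis using card_mono[OF f2 s2] by simp
    qed
    moreover have "card (nbhd (cart_edges EG EH) (VG \<times> VH - VG \<times> S) v) = card (nbhd EH (VH - S) h)"
      using e1 card_image[OF inj_on_subset[OF inj]] by simp
    ultimately show "int (card (nbhd (cart_edges EG EH) (VG \<times> S) v))
      \<ge> int (card (nbhd (cart_edges EG EH) (VG \<times> VH - VG \<times> S) v)) + k"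
      using def gh by force
  qed
  ultimately show ?thesis using SV ne unfolding global_def_alliance_def by auto
qed

lemma gda_le: "global_def_alliance V E k S \<Longrightarrow> gda_number V E k \<le> enat (card S)"
  unfolding gda_number_def by (auto intro: Inf_lower)

lemma gda_cases:
  "gda_number V E k = \<infinity> \<or> (\<exists>S. global_def_alliance V E k S \<and> gda_number V E k = enat (card S))"
proof (cases "{enat (card S) | S. global_def_alliance V E k S} = {}")
  case True thus ?thesis unfolding gda_number_def by (simp add: top_enat_def)
next
  case False
  hence "Inf {enat (card S) | S. global_def_alliance V E k S} \<in> {enat (card S) | S. global_def_alliance V E k S}"
  proof -
    obtain x where "x \<in> {enat (card S) | S. global_def_alliance V E k S}" using False by blast
    hence "(LEAST x. x \<in> {enat (card S) | S. global_def_alliance V E k S}) \<in> {enat (card S) | S. global_def_alliance V E k S}"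
      by (rule LeastI)
    thus ?thesis unfolding Inf_enat_def using False by simp
  qed
  thus ?thesis unfolding gda_number_def by blast
qed

theorem mainTheorem2:
  fixes VG :: "'a set" and EG :: "'a \<Rightarrow> 'a \<Rightarrow> bool"
    and VH :: "'b set" and EH :: "'b \<Rightarrow> 'b \<Rightarrow> bool"
    and k :: int
  assumes "simple_graph VG EG" and "VG \<noteq> {}"
    and "simple_graph VH EH" and "VH \<noteq> {}"
  shows "gda_number (VG \<times> VH) (cart_edges EG EH) k
     \<le> min (gda_number VG EG k * enat (card VH)) (gda_number VH EH k * enat (card VG))"
proof -
  have cG: "card VG > 0" and cH: "card VH > 0"
    using assms unfolding simple_graph_def by (auto simp: card_gt_0_iff)
  have 1: "gda_number (VG \<times> VH) (cart_edges EG EH) k \<le> gda_number VG EG k * enat (card VH)"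
    using gda_cases[of VG EG k]
  proof
    assume "gda_number VG EG k = \<infinity>" thus ?thesis using cH by (simp add: imult_is_infinity)
  next
    assume "\<exists>S. global_def_alliance VG EG k S \<and> gda_number VG EG k = enat (card S)"
    then obtain S where S: "global_def_alliance VG EG k S" "gda_number VG EG k = enat (card S)" by blast
    from gda_le[OF alliance_left[OF assms(1,3,4) S(1)]] S(2) show ?thesis
      by (simp add: card_cartesian_product)
  qed
  have 2: "gda_number (VG \<times> VH) (cart_edges EG EH) k \<le> gda_number VH EH k * enat (card VG)"
    using gda_cases[of VH EH k]
  proof
    assume "gda_number VH EH k = \<infinity>" thus ?thesis using cG by (simp add: imult_is_infinity)
  next
    assume "\<exists>S. global_def_alliance VH EH k S \<and> gda_number VH EH k = enat (card S)"
    then obtain S where S: "global_def_alliance VH EH k S" "gda_number VH EH k = enat (card S)" by blast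
    from gda_le[OF alliance_right[OF assms(1,3,2) S(1)]] S(2) show ?thesis
      by (simp add: card_cartesian_product mult.commute)
  qed
  from 1 2 show ?thesis by simp
qed

end
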